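(* Let $d \ge 1$ be an integer and let $k > 0$. Suppose a random vector $\boldsymbol{w} = (w_1,\ldots,w_d) \in \mathbb{R}^d$ is drawn from a $d$-variate spherically symmetric distribution $\mathcal{D}$. Then for any fixed $\boldsymbol{x}, \boldsymbol{y} \in \mathbb{R}^d$, $$\left|\sum_{i=1}^d w_i x_i - \sum_{i=1}^d w_i y_i\right| \geq k \sum_{i=1}^d |x_i - y_i|$$ holds with probability at least $P_{\boldsymbol{\gamma} \sim \mathcal{D}}\left(|\gamma_1| \geq k\sqrt{d}\right)$, where $\gamma_1$ denotes the first coordinate of $\boldsymbol{\gamma}$.
   Context: A probability distribution $\mathcal{D}$ on $\mathbb{R}^d$ is spherically symmetric if for every $d \times d$ orthogonal matrix $Q$, whenever $\boldsymbol{w} \sim \mathcal{D}$, the vector $Q\boldsymbol{w}$ also has distribution $\mathcal{D}$. *)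

theory Defs
  imports "HOL-Analysis.Analysis" "HOL-Probability.Probability"
begin

definition spherically_symmetric :: "(real ^ 'n) measure \<Rightarrow> bool" where
  "spherically_symmetric D \<longleftrightarrow>
     (\<forall>Q :: real ^ 'n ^ 'n. orthogonal_matrix Q \<longrightarrow> distr D D (\<lambda>w. Q *v w) = D)"

end

theory Submission
  imports Defs
begin

lemma l1_le_sqrt_card_norm:
  fixes v :: "real ^ 'n"
  shows "(\<Sum>i\<in>UNIV. \<bar>v $ i\<bar>) \<le> sqrt (real CARD('n)) * norm v"
proof -
  define a :: "real ^ 'n" where "a = (\<chi> i. \<bar>v $ i\<bar>)"
  define e :: "real ^ 'n" where "e = (\<chi> i. 1)"
  have "(\<Sum>i\<in>UNIV. \<bar>v $ i\<bar>) = a \<bullet> e" by (simp add: a_def e_def inner_vec_def)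
  also have "\<dots> \<le> norm a * norm e" by (rule norm_cauchy_schwarz)
  also have "norm a = norm v" by (simp add: a_def norm_vec_def L2_set_def)
  also have "norm e = sqrt (real CARD('n))" by (simp add: e_def norm_vec_def L2_set_def)
  finally show ?thesis by (simp add: mult.commute)
qed

theorem theorem1:
  fixes D :: "(real ^ 'n) measure"
    and k :: real
    and x y :: "real ^ 'n"
    and i1 :: 'n
  assumes "prob_space D"
    and "sets D = sets borel"
    and "spherically_symmetric D"
    and "k > 0"
  shows "measure D {w. \<bar>(\<Sum>i\<in>UNIV. w $ i * x $ i) - (\<Sum>i\<in>UNIV. w $ i * y $ i)\<bar>
                        \<ge> k * (\<Sum>i\<in>UNIV. \<bar>x $ i - y $ i\<bar>)}
         \<ge> measure D {g. \<bar>g $ i1\<bar> \<ge> k * sqrt (real CARD('n))}"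
proof -
  interpret P: prob_space D by fact
  let ?T = "{w. \<bar>(\<Sum>i\<in>UNIV. w $ i * x $ i) - (\<Sum>i\<in>UNIV. w $ i * y $ i)\<bar>
                        \<ge> k * (\<Sum>i\<in>UNIV. \<bar>x $ i - y $ i\<bar>)}"
  let ?A = "{g :: real ^ 'n. \<bar>g $ i1\<bar> \<ge> k * sqrt (real CARD('n))}"
  define v where "v = x - y"
  have spD: "space D = UNIV" using sets_eq_imp_space_eq[OF assms(2)] by simp
  have T_eq: "?T = {w. \<bar>w \<bullet> v\<bar> \<ge> k * (\<Sum>i\<in>UNIV. \<bar>v $ i\<bar>)}"
    by (simp add: v_def inner_vec_def sum_subtractf[symmetric] algebra_simps)
  show ?thesis
  proof (cases "v = 0")
    case True
    then have "?T = space D" using T_eq spD by simp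
    then show ?thesis using P.prob_space P.measure_le_1 by simp
  next
    case False
    define u where "u = v /\<^sub>R norm v"
    have nu: "norm u = norm (axis i1 (1::real))" using False by (simp add: u_def)
    obtain f :: "real^'n \<Rightarrow> real^'n" where f: "orthogonal_transformation f" "f u = axis i1 1"
      using orthogonal_transformation_exists[OF nu] by blast
    define Q where "Q = matrix f"
    have lf: "linear f" using f(1) by (simp add: orthogonal_transformation)
    have oQ: "orthogonal_matrix Q" using f(1) orthogonal_transformation_matrix Q_def by blast
    have Qw: "Q *v w = f w" for w using lf by (simp add: Q_def matrix_works)
    have comp: "(Q *v w) $ i1 = w \<bullet> u" for w
    proof -
      have "(Q *v w) $ i1 = f w \<bullet> axis i1 1" by (simp add: Qw inner_axis)
      also have "\<dots> = f w \<bullet> f u" using f(2) by simp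
      also have "\<dots> = w \<bullet> u" using f(1) by (simp add: orthogonal_transformation_def)
      finally show ?thesis .
    qed
    have meas: "(\<lambda>w. Q *v w) \<in> measurable D D"
      using measurable_cong_sets[OF assms(2) assms(2)]
      by (simp add: linear_continuous_on matrix_vector_mul_linear borel_measurable_continuous_onI)
    have Aset: "?A \<in> sets D" unfolding assms(2) by (intro borel_closed closed_Collect_le continuous_intros)
    have Tset: "?T \<in> sets D" unfolding assms(2) by (intro borel_closed closed_Collect_le continuous_intros)
    have "distr D D (\<lambda>w. Q *v w) = D" using assms(3) oQ unfolding spherically_symmetric_def by blast
    then have "measure D ?A = measure (distr D D (\<lambda>w. Q *v w)) ?A" by simp
    also have "\<dots> = measure D ((\<lambda>w. Q *v w) -` ?A \<inter> space D)"
      using meas Aset by (rule measure_distr)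
    also have "\<dots> \<le> measure D ?T"
    proof (rule P.finite_measure_mono[OF _ Tset])
      show "(\<lambda>w. Q *v w) -` ?A \<inter> space D \<subseteq> ?T"
      proof
        fix w assume "w \<in> (\<lambda>w. Q *v w) -` ?A \<inter> space D"
        then have h: "\<bar>w \<bullet> u\<bar> \<ge> k * sqrt (real CARD('n))" by (simp add: comp)
        have nv: "norm v > 0" using False by simp
        have "w \<bullet> u = (w \<bullet> v) / norm v" by (simp add: u_def divide_inverse_commute)
        then have "\<bar>w \<bullet> v\<bar> = \<bar>w \<bullet> u\<bar> * norm v" using nv by (simp add: abs_mult)
        also have "\<dots> \<ge> k * sqrt (real CARD('n)) * norm v"
          using h nv by (simp add: mult_right_mono)
        finally have "\<bar>w \<bullet> v\<bar> \<ge> k * (sqrt (real CARD('n)) * norm v)" by simp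
        moreover have "k * (\<Sum>i\<in>UNIV. \<bar>v $ i\<bar>) \<le> k * (sqrt (real CARD('n)) * norm v)"
          using l1_le_sqrt_card_norm[of v] assms(4) by simp
        ultimately show "w \<in> ?T" unfolding T_eq by simp
      qed
    qed
    finally show ?thesis .
  qed
qed

end
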